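(* Let $m\ge 2$ and $\alpha\in[0,1]$. Every deterministic voting rule $f$ that takes ranked preferences with intensities as input satisfies, under mandatory elicitation of the intensities, $$\mathsf{dist}_\alpha(f)\ge 1+2\,\frac{1-\alpha^{\lfloor m/2\rfloor}}{1+\alpha^{\lfloor m/2\rfloor}}.$$
   Context: An election $\mathcal E=(N,A,\vec\sigma)$ has a finite set $N$ of $n$ agents, a set $A$ of $m$ alternatives, and a profile $\vec\sigma=(\sigma_1,\dots,\sigma_n)$. Each $\sigma_i=(\pi_i,\Join_i)$ consists of a bijection $\pi_i:[m]\to A$, where $\pi_i(1)$ is agent $i$'s most preferred alternative, and a map $\Join_i:[m-1]\to\{\succ,\succ\!\!\succ\}$ recording strong ($\succ\!\!\succ$) or ordinary ($\succ$) preference between consecutive alternatives. A metric $d$ on $N\cup A$ is nonnegative and symmetric, satisfies the triangle inequality, and has $d(x,x)=0$. For $\alpha\in[0,1]$, the profile $\vec\sigma$ is $\alpha$-consistent with $d$ under mandatory elicitation if for every agent $i$ and every $j\in[m-1]$: - if $\Join_i(j)=\,\succ$, then $d(i,\pi_i(j+1))\ge d(i,\pi_i(j))>\alpha\, d(i,\pi_i(j+1))$; - if $\Join_i(j)=\,\succ\!\!\succ$, then $d(i,\pi_i(j))\le \alpha\, d(i,\pi_i(j+1))$. Let $\mathrm{sc}_d(a)=\sum_{i\in N}d(i,a)$. Define $\mathsf{dist}_\alpha(a,\mathcal E)=\sup_d \mathrm{sc}_d(a)/\min_{b\in A}\mathrm{sc}_d(b)$ over such $\alpha$-consistent metrics $d$.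 For a deterministic voting rule $f$ (mapping any profile over the $m$ alternatives to an alternative), $\mathsf{dist}_\alpha(f)=\sup_{\mathcal E}\mathsf{dist}_\alpha(f(\vec\sigma),\mathcal E)$ over all elections with $m$ alternatives. *)

theory Defs
  imports Complex_Main "HOL-Library.Extended_Real"
begin

text \<open>Agents are 0..n-1, alternatives are 0..m-1.  Points of the metric space
  N \<union> A are encoded in the sum type: Inl i is agent i, Inr a is alternative a.
  A profile is given by rk (rk i j = alternative at rank j of agent i, ranks 1..m)
  and J (J i j = True means strong preference between ranks j and j+1,
  False means ordinary preference).\<close>

definition valid_profile :: "nat \<Rightarrow> nat \<Rightarrow> (nat \<Rightarrow> nat \<Rightarrow> nat) \<Rightarrow> bool" where
  "valid_profile m n rk \<longleftrightarrow> (\<forall>i<n. bij_betw (rk i) {1..m} {..<m})"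

definition points :: "nat \<Rightarrow> nat \<Rightarrow> (nat + nat) set" where
  "points m n = Inl ` {..<n} \<union> Inr ` {..<m}"

definition is_metric_on :: "'a set \<Rightarrow> ('a \<Rightarrow> 'a \<Rightarrow> real) \<Rightarrow> bool" where
  "is_metric_on P d \<longleftrightarrow>
     (\<forall>x\<in>P. \<forall>y\<in>P. d x y \<ge> 0 \<and> d x y = d y x \<and> d x x = 0 \<and>
        (\<forall>z\<in>P. d x z \<le> d x y + d y z))"

definition alpha_consistent ::
  "real \<Rightarrow> nat \<Rightarrow> nat \<Rightarrow> (nat \<Rightarrow> nat \<Rightarrow> nat) \<Rightarrow> (nat \<Rightarrow> nat \<Rightarrow> bool)
     \<Rightarrow> (nat + nat \<Rightarrow> nat + nat \<Rightarrow> real) \<Rightarrow> bool" where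
  "alpha_consistent \<alpha> m n rk J d \<longleftrightarrow>
     (\<forall>i<n. \<forall>j\<in>{1..m-1}.
        (if J i j
         then d (Inl i) (Inr (rk i j)) \<le> \<alpha> * d (Inl i) (Inr (rk i (j+1)))
         else d (Inl i) (Inr (rk i (j+1))) \<ge> d (Inl i) (Inr (rk i j)) \<and>
              d (Inl i) (Inr (rk i j)) > \<alpha> * d (Inl i) (Inr (rk i (j+1)))))"

definition social_cost :: "nat \<Rightarrow> (nat + nat \<Rightarrow> nat + nat \<Rightarrow> real) \<Rightarrow> nat \<Rightarrow> real" where
  "social_cost n d a = (\<Sum>i<n. d (Inl i) (Inr a))"

definition cost_ratio :: "real \<Rightarrow> real \<Rightarrow> ereal" where
  "cost_ratio x y = (if y = 0 then (if x = 0 then 1 else \<infinity>) else ereal (x / y))"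

definition dist_alt ::
  "real \<Rightarrow> nat \<Rightarrow> nat \<Rightarrow> (nat \<Rightarrow> nat \<Rightarrow> nat) \<Rightarrow> (nat \<Rightarrow> nat \<Rightarrow> bool) \<Rightarrow> nat \<Rightarrow> ereal" where
  "dist_alt \<alpha> m n rk J a =
     (SUP d \<in> {d. is_metric_on (points m n) d \<and> alpha_consistent \<alpha> m n rk J d}.
        cost_ratio (social_cost n d a) (Min (social_cost n d ` {..<m})))"

definition dist_rule ::
  "real \<Rightarrow> nat \<Rightarrow> (nat \<Rightarrow> (nat \<Rightarrow> nat \<Rightarrow> nat) \<Rightarrow> (nat \<Rightarrow> nat \<Rightarrow> bool) \<Rightarrow> nat) \<Rightarrow> ereal" where
  "dist_rule \<alpha> m f =
     (SUP (n, rk, J) \<in> {(n, rk, J). n \<ge> 1 \<and> valid_profile m n rk}.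
        dist_alt \<alpha> m n rk J (f n rk J))"

end

theory Submission
  imports Defs
begin

definition l1d :: "(nat + nat \<Rightarrow> real \<times> real) \<Rightarrow> nat + nat \<Rightarrow> nat + nat \<Rightarrow> real" where
  "l1d pos p q = \<bar>fst (pos p) - fst (pos q)\<bar> + \<bar>snd (pos p) - snd (pos q)\<bar>"

lemma l1d_metric: "is_metric_on P (l1d pos)"
  unfolding is_metric_on_def l1d_def by auto

definition ee :: "real \<Rightarrow> nat \<Rightarrow> nat \<Rightarrow> real" where
  "ee \<rho> k j = 2 * \<rho> ^ (k - min (j - 1) k)"

lemma ee_bounds:
  assumes "0 < \<rho>" "\<rho> < 1"
  shows "2 * \<rho> ^ k \<le> ee \<rho> k j" "ee \<rho> k j \<le> 2"
proof -
  have "\<rho> ^ k \<le> \<rho> ^ (k - min (j - 1) k)"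
    by (rule power_decreasing) (use assms in auto)
  then show "2 * \<rho> ^ k \<le> ee \<rho> k j" unfolding ee_def by simp
  have "\<rho> ^ (k - min (j - 1) k) \<le> 1"
    using assms by (simp add: power_le_one)
  then show "ee \<rho> k j \<le> 2" unfolding ee_def by simp
qed

lemma core:
  assumes m2: "m \<ge> 2" and a0: "0 \<le> \<alpha>" and a1: "\<alpha> < 1" and r0: "\<alpha> < \<rho>" and r1: "\<rho> < 1"
    and iY: "iY < (2::nat)" and iM: "iM = 1 - iY"
    and rank: "\<forall>j\<in>{1..m}. r (rk iY j) = j"
    and y: "y < m" "r y = 1" and x: "x < m" "r x \<ge> m div 2 + 1"
  shows "ereal (1 + 2 * (1 - \<rho> ^ (m div 2)) / (1 + \<rho> ^ (m div 2)))
           \<le> dist_alt \<alpha> m 2 rk (\<lambda>i j. False) x"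
proof -
  define k where "k = m div 2"
  define s where "s = \<rho> ^ k"
  have rpos: "0 < \<rho>" using a0 r0 by linarith
  have k1: "k \<ge> 1" using m2 unfolding k_def by auto
  have s0: "0 < s" unfolding s_def using rpos by simp
  have s1: "s < 1" unfolding s_def using rpos r1 k1
    by (simp add: power_less_one_iff)
  define D where "D a = ee \<rho> k (r a)" for a
  define pos where "pos p = (case p of Inl i \<Rightarrow> (if i = iY then (1 + s, 0) else (0, 0))
                          | Inr a \<Rightarrow> (1 - D a / 2, D a / 2 - s))" for p
  define d where "d = l1d pos"
  have Db: "2 * s \<le> D a" "D a \<le> 2" for a
    unfolding D_def s_def using ee_bounds[OF rpos r1] by auto
  have dY: "d (Inl iY) (Inr a) = D a" for a
    using Db[of a] s0 unfolding d_def l1d_def pos_def by auto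
  have iMY: "iM \<noteq> iY" using iY iM by presburger
  have dM: "d (Inl iM) (Inr a) = 1 - s" for a
    using Db[of a] s0 iMY unfolding d_def l1d_def pos_def by auto
  have met: "is_metric_on (points m 2) d" unfolding d_def by (rule l1d_metric)
  have eemono: "ee \<rho> k j \<le> ee \<rho> k (j+1)" for j
  proof -
    have "\<rho> ^ (k - min (j - 1) k) \<le> \<rho> ^ (k - min (j + 1 - 1) k)"
      by (rule power_decreasing) (use rpos r1 in auto)
    then show ?thesis unfolding ee_def by simp
  qed
  have eestrict: "ee \<rho> k j > \<alpha> * ee \<rho> k (j+1)" if "j \<ge> 1" for j
  proof (cases "j \<le> k")
    case True
    have eq: "k - min (j - 1) k = Suc (k - min (j + 1 - 1) k)" using True that by auto
    have "ee \<rho> k j = 2 * \<rho> ^ Suc (k - min (j + 1 - 1) k)" unfolding ee_def by (subst eq) (rule refl)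
    then have "ee \<rho> k j = \<rho> * ee \<rho> k (j+1)" unfolding ee_def by (simp only: power_Suc)
    moreover have "ee \<rho> k (j+1) > 0" unfolding ee_def using rpos by simp
    ultimately show ?thesis using r0 by (simp add: mult_strict_right_mono)
  next
    case False
    then have "ee \<rho> k j = 2" "ee \<rho> k (j+1) = 2" unfolding ee_def by auto
    then show ?thesis using a1 by simp
  qed
  have cons: "alpha_consistent \<alpha> m 2 rk (\<lambda>i j. False) d"
    unfolding alpha_consistent_def
  proof (intro allI impI ballI)
    fix i j assume i: "i < (2::nat)" and j: "j \<in> {1..m-1}"
    show "if False then d (Inl i) (Inr (rk i j)) \<le> \<alpha> * d (Inl i) (Inr (rk i (j + 1)))
         else d (Inl i) (Inr (rk i j)) \<le> d (Inl i) (Inr (rk i (j + 1))) \<and>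
              \<alpha> * d (Inl i) (Inr (rk i (j + 1))) < d (Inl i) (Inr (rk i j))"
    proof (cases "i = iY")
      case True
      have "r (rk iY j) = j" "r (rk iY (j+1)) = j + 1" using rank j by auto
      then have "d (Inl i) (Inr (rk i j)) = ee \<rho> k j" "d (Inl i) (Inr (rk i (j+1))) = ee \<rho> k (j+1)"
        using True dY D_def by auto
      then show ?thesis using eemono eestrict j by auto
    next
      case False
      then have "i = iM" using i iY iM by auto
      then show ?thesis using dM s1 a1 a0 by (simp add: mult_strict_right_mono)
    qed
  qed
  have sc: "social_cost 2 d a = D a + (1 - s)" for a
  proof -
    have "social_cost 2 d a = d (Inl 0) (Inr a) + d (Inl 1) (Inr a)"
      unfolding social_cost_def by (simp add: numeral_2_eq_2)
    also have "\<dots> = D a + (1 - s)"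
      using iY iM dY dM by (cases iY) auto
    finally show ?thesis .
  qed
  have Dx: "D x = 2" unfolding D_def ee_def using x(2) unfolding k_def by auto
  have Dy: "D y = 2 * s" unfolding D_def ee_def s_def using y(2) by auto
  define mn where "mn = Min (social_cost 2 d ` {..<m})"
  have fin: "finite (social_cost 2 d ` {..<m})" by simp
  have ne: "social_cost 2 d ` {..<m} \<noteq> {}" using y by auto
  have mnle: "mn \<le> 1 + s"
  proof -
    have "social_cost 2 d y \<in> social_cost 2 d ` {..<m}" using y by simp
    from Min_le[OF fin this] show ?thesis using sc[of y] Dy by (simp add: mn_def)
  qed
  have mnpos: "mn > 0" unfolding mn_def
    using Min_in[OF fin ne] sc Db s1 s0
    by (smt (verit, ccfv_SIG) imageE)
  have "1 + 2 * (1 - s) / (1 + s) = (3 - s) / (1 + s)"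
    using s0 by (simp add: field_simps)
  also have "\<dots> \<le> (3 - s) / mn"
    using mnle mnpos s1 by (intro divide_left_mono) auto
  also have "\<dots> = social_cost 2 d x / mn" using sc[of x] Dx by simp
  finally have key: "1 + 2 * (1 - s) / (1 + s) \<le> social_cost 2 d x / mn" .
  have "ereal (1 + 2 * (1 - s) / (1 + s)) \<le> cost_ratio (social_cost 2 d x) mn"
    unfolding cost_ratio_def using mnpos key by auto
  also have "\<dots> \<le> dist_alt \<alpha> m 2 rk (\<lambda>i j. False) x"
    unfolding dist_alt_def mn_def
    by (rule SUP_upper) (use met cons in auto)
  finally show ?thesis unfolding s_def k_def .
qed


lemma valid_rk: "m \<ge> 1 \<Longrightarrow> valid_profile m 2 (\<lambda>i j. if i = 0 then j - 1 else m - j)"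
  unfolding valid_profile_def
proof (intro allI impI)
  fix i :: nat assume "m \<ge> 1" "i < 2"
  show "bij_betw ((\<lambda>i j. if i = 0 then j - 1 else m - j) i) {1..m} {..<m}"
  proof (cases "i = 0")
    case True
    show ?thesis using True
      by (intro bij_betw_byWitness[where f'="\<lambda>a. a + 1"]) auto
  next
    case False
    show ?thesis using False
      by (intro bij_betw_byWitness[where f'="\<lambda>a. m - a"]) auto
  qed
qed

theorem lemma1:
  fixes m :: nat and \<alpha> :: real
    and f :: "nat \<Rightarrow> (nat \<Rightarrow> nat \<Rightarrow> nat) \<Rightarrow> (nat \<Rightarrow> nat \<Rightarrow> bool) \<Rightarrow> nat"
  assumes "m \<ge> 2" and "0 \<le> \<alpha>" and "\<alpha> \<le> 1"
    and "\<And>n rk J. n \<ge> 1 \<Longrightarrow> valid_profile m n rk \<Longrightarrow> f n rk J < m"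
  shows "dist_rule \<alpha> m f \<ge>
           ereal (1 + 2 * (1 - \<alpha> ^ (m div 2)) / (1 + \<alpha> ^ (m div 2)))"
proof -
  define rk where "rk = (\<lambda>i j. if i = (0::nat) then j - 1 else m - (j::nat))"
  have vr: "valid_profile m 2 rk" unfolding rk_def using valid_rk assms(1) by auto
  have upper: "dist_alt \<alpha> m 2 rk J (f 2 rk J) \<le> dist_rule \<alpha> m f" for J
    unfolding dist_rule_def
    using SUP_upper[of "(2, rk, J)" "{(n, rk, J). 1 \<le> n \<and> valid_profile m n rk}"
        "\<lambda>(n, rk, J). dist_alt \<alpha> m n rk J (f n rk J)"] vr by auto
  show ?thesis
  proof (cases "\<alpha> = 1")
    case True
    define J where "J = (\<lambda>(i::nat) (j::nat). True)"
    define d where "d = (\<lambda>(p::nat+nat) (q::nat+nat). (0::real))"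
    have "ereal 1 \<le> cost_ratio (social_cost 2 d (f 2 rk J)) (Min (social_cost 2 d ` {..<m}))"
    proof -
      have "social_cost 2 d a = 0" for a unfolding social_cost_def d_def by simp
      moreover have "(0::nat) \<in> {..<m}" using assms(1) by simp
      then have "{..<m} \<noteq> {}" by blast
      ultimately show ?thesis unfolding cost_ratio_def by simp
    qed
    also have "\<dots> \<le> dist_alt \<alpha> m 2 rk J (f 2 rk J)"
      unfolding dist_alt_def
      by (rule SUP_upper) (auto simp: d_def J_def is_metric_on_def alpha_consistent_def)
    also have "\<dots> \<le> dist_rule \<alpha> m f" by (rule upper)
    finally show ?thesis using True by simp
  next
    case False
    then have a1: "\<alpha> < 1" using assms(3) by simp
    define J where "J = (\<lambda>(i::nat) (j::nat). False)"
    define x where "x = f 2 rk J"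
    have xm: "x < m" unfolding x_def using assms(4) vr by auto
    define g where "g \<rho> = 1 + 2 * (1 - \<rho> ^ (m div 2)) / (1 + \<rho> ^ (m div 2))" for \<rho> :: real
    have gle: "ereal (g \<rho>) \<le> dist_rule \<alpha> m f" if "\<rho> \<in> {\<alpha><..<1}" for \<rho>
    proof -
      have "ereal (g \<rho>) \<le> dist_alt \<alpha> m 2 rk J x"
      proof (cases "m div 2 \<le> x")
        case True
        show ?thesis unfolding g_def J_def
          by (rule core[where iY=0 and iM=1 and r="\<lambda>a. a + 1" and y=0])
             (use assms(1,2) a1 that True xm in \<open>auto simp: rk_def\<close>)
      next
        case False
        show ?thesis unfolding g_def J_def
          by (rule core[where iY=1 and iM=0 and r="\<lambda>a. m - a" and y="m - 1"])
             (use assms(1,2) a1 that False xm in \<open>auto simp: rk_def\<close>)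
      qed
      also have "\<dots> \<le> dist_rule \<alpha> m f" unfolding x_def by (rule upper)
      finally show ?thesis .
    qed
    have lim: "((\<lambda>\<rho>. ereal (g \<rho>)) \<longlongrightarrow> ereal (g \<alpha>)) (at_right \<alpha>)"
    proof -
      have "((\<lambda>\<rho>. g \<rho>) \<longlongrightarrow> g \<alpha>) (at_right \<alpha>)"
        unfolding g_def using assms(2)
        by (intro tendsto_intros) (smt (verit) zero_le_power)
      then show ?thesis by (rule tendsto_ereal)
    qed
    have ev: "eventually (\<lambda>\<rho>. ereal (g \<rho>) \<le> dist_rule \<alpha> m f) (at_right \<alpha>)"
      using eventually_at_right_real[OF a1] by (rule eventually_mono) (rule gle)
    have "ereal (g \<alpha>) \<le> dist_rule \<alpha> m f"
      by (rule tendsto_le[OF trivial_limit_at_right_real tendsto_const lim ev])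
    then show ?thesis unfolding g_def .
  qed
qed

end
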